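(* Let $n\ge 1$, $N\ge 2$ even, $m>0$, and let $D_m=-\mathrm{i}\sum_{j=1}^n\alpha^j\partial_{x^j}+m\beta$ be a Dirac operator on $\mathbb{R}^n$ with $N\times N$ self-adjoint, mutually anticommuting matrices $\alpha^1,\dots,\alpha^n,\beta$ satisfying $(\alpha^j)^2=\beta^2=1_N$. Let $\bm{K}:\mathbb{C}^N\to\mathbb{C}^N$ denote complex conjugation, and let $B\in\mathrm{End}(\mathbb{C}^N)$ satisfy $$\{B\bm{K},D_m\}=0,\qquad B\bm{K}=\bm{K}B^\ast,\qquad B^\ast B=1_N.$$ For $\psi\in L^2(\mathbb{R}^n,\mathbb{C}^N)$ define $$Q(\psi)=\int_{\mathbb{R}^n}\psi(x)^\ast\psi(x)\,dx,\qquad \Lambda(\psi)=\int_{\mathbb{R}^n}\psi(x)^\ast B\bm{K}\psi(x)\,dx.$$ Let $a,b\in\mathbb{C}$ with $|a|^2-|b|^2=1$, and set $g=a+bB\bm{K}$ (acting pointwise, $g\psi=a\psi+bB\overline{\psi}$). Then for every $\psi\in L^2(\mathbb{R}^n,\mathbb{C}^N)$, $$Q(g\psi)=(|a|^2+|b|^2)Q(\psi)+2\,\mathrm{Re}\{\bar a b\,\Lambda(\psi)\},$$ $$\Lambda(g\psi)=\bar a^2\Lambda(\psi)+2\bar a\bar b\,Q(\psi)+\bar b^2\,\overline{\Lambda(\psi)},$$ and consequently $$Q(g\psi)^2-|\Lambda(g\psi)|^2=Q(\psi)^2-|\Lambda(\psi)|^2.$$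
   Context: $\{X,Y\}=XY+YX$ denotes the anticommutator; $\psi^\ast$ is the hermitian conjugate. The set of operators $a+bB\bm{K}$ with $|a|^2-|b|^2=1$ is called the Bogoliubov group. *)

theory Defs
  imports "HOL-Analysis.Analysis"
begin

definition vconj :: "complex ^ 'N \<Rightarrow> complex ^ 'N" where
  "vconj v = (\<chi> i. cnj (v $ i))"

definition cadj :: "complex ^ 'N ^ 'N \<Rightarrow> complex ^ 'N ^ 'N" where
  "cadj A = (\<chi> i j. cnj (A $ j $ i))"

definition cinner :: "complex ^ 'N \<Rightarrow> complex ^ 'N \<Rightarrow> complex" where
  "cinner u v = (\<Sum>i\<in>UNIV. cnj (u $ i) * v $ i)"

definition BK :: "complex ^ 'N ^ 'N \<Rightarrow> ('x \<Rightarrow> complex ^ 'N) \<Rightarrow> ('x \<Rightarrow> complex ^ 'N)" where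
  "BK B \<psi> = (\<lambda>x. B *v vconj (\<psi> x))"

definition dirac :: "('n::finite \<Rightarrow> complex ^ 'N ^ 'N) \<Rightarrow> complex ^ 'N ^ 'N \<Rightarrow> real
      \<Rightarrow> (real ^ 'n \<Rightarrow> complex ^ 'N) \<Rightarrow> (real ^ 'n \<Rightarrow> complex ^ 'N)" where
  "dirac \<alpha> \<beta> m \<psi> = (\<lambda>x. (- \<i>) *s (\<Sum>j\<in>UNIV. \<alpha> j *v frechet_derivative \<psi> (at x) (axis j 1))
                          + complex_of_real m *s (\<beta> *v \<psi> x))"

definition L2 :: "(real ^ 'n::finite \<Rightarrow> complex ^ 'N) \<Rightarrow> bool" where
  "L2 \<psi> \<longleftrightarrow> \<psi> \<in> borel_measurable lborel \<and> integrable lborel (\<lambda>x. (norm (\<psi> x))\<^sup>2)"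

definition Qf :: "(real ^ 'n::finite \<Rightarrow> complex ^ 'N) \<Rightarrow> complex" where
  "Qf \<psi> = (LINT x|lborel. cinner (\<psi> x) (\<psi> x))"

definition Lam :: "complex ^ 'N ^ 'N \<Rightarrow> (real ^ 'n::finite \<Rightarrow> complex ^ 'N) \<Rightarrow> complex" where
  "Lam B \<psi> = (LINT x|lborel. cinner (\<psi> x) (BK B \<psi> x))"

definition bog :: "complex \<Rightarrow> complex \<Rightarrow> complex ^ 'N ^ 'N \<Rightarrow> ('x \<Rightarrow> complex ^ 'N) \<Rightarrow> ('x \<Rightarrow> complex ^ 'N)" where
  "bog a b B \<psi> = (\<lambda>x. a *s \<psi> x + b *s BK B \<psi> x)"

end

theory Submission
  imports Defs
begin


lemma cinner_adj: "cinner (A *v x) y = cinner x (cadj A *v y)"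
proof -
  have "cinner (A *v x) y = (\<Sum>i\<in>UNIV. \<Sum>j\<in>UNIV. cnj (A$i$j) * cnj (x$j) * y$i)"
    unfolding cinner_def matrix_vector_mult_def by (simp add: sum_distrib_right)
  also have "\<dots> = (\<Sum>j\<in>UNIV. \<Sum>i\<in>UNIV. cnj (A$i$j) * cnj (x$j) * y$i)"
    by (rule sum.swap)
  also have "\<dots> = cinner x (cadj A *v y)"
    unfolding cinner_def matrix_vector_mult_def cadj_def
    by (simp add: sum_distrib_left mult_ac)
  finally show ?thesis .
qed

lemma vconj_vconj[simp]: "vconj (vconj x) = x"
  unfolding vconj_def by (simp add: vec_eq_iff)

lemma cinner_conj: "cinner (vconj x) (vconj y) = cnj (cinner x y)"
  unfolding cinner_def vconj_def by simp

lemma cinner_sym: "cinner y x = cnj (cinner x y)"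
  unfolding cinner_def by (simp add: mult_ac)

lemma cinner_self: "cinner x x = complex_of_real ((norm x)^2)"
proof -
  have "(norm x)^2 = (\<Sum>i\<in>UNIV. (cmod (x$i))^2)"
    unfolding norm_vec_def L2_set_def by (simp add: sum_nonneg)
  moreover have "cnj (x$i) * x$i = complex_of_real ((cmod (x$i))^2)" for i
    by (metis complex_norm_square mult.commute)
  ultimately show ?thesis unfolding cinner_def by simp
qed

lemma cinner_lin_left: "cinner (a *s x + b *s y) z = cnj a * cinner x z + cnj b * cinner y z"
  unfolding cinner_def by (simp add: algebra_simps sum.distrib sum_distrib_left)

lemma cinner_lin_right: "cinner z (a *s x + b *s y) = a * cinner z x + b * cinner z y"
  unfolding cinner_def by (simp add: algebra_simps sum.distrib sum_distrib_left)

lemma BKlin: "B *v vconj (a *s x + b *s y) = cnj a *s (B *v vconj x) + cnj b *s (B *v vconj y)"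
  unfolding vconj_def matrix_vector_mult_def
  by (simp add: vec_eq_iff algebra_simps sum.distrib sum_distrib_left)

lemma cmod_cinner_le: "cmod (cinner u v) \<le> real CARD('N) * ((norm u)^2 + (norm v)^2)"
  for u v :: "complex ^ 'N::finite"
proof -
  have "cmod (cinner u v) \<le> (\<Sum>i\<in>UNIV. cmod (cnj (u$i) * v$i))"
    unfolding cinner_def by (rule norm_sum)
  also have "\<dots> \<le> (\<Sum>i\<in>(UNIV::'N set). (norm u)^2 + (norm v)^2)"
  proof (rule sum_mono)
    fix i
    have h1: "cmod (u$i) \<le> norm u" by (rule Finite_Cartesian_Product.norm_nth_le)
    have h2: "cmod (v$i) \<le> norm v" by (rule Finite_Cartesian_Product.norm_nth_le)
    have "cmod (cnj (u$i) * v$i) = cmod (u$i) * cmod (v$i)" by (simp add: norm_mult)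
    also have "\<dots> \<le> norm u * norm v"
      using h1 h2 by (intro mult_mono) auto
    also have "\<dots> \<le> (norm u)^2 + (norm v)^2"
    proof -
      have "0 \<le> (norm u - norm v)^2" by simp
      then have q: "0 \<le> (norm u)^2+(norm v)^2 - 2*norm u*norm v" by (simp only: power2_diff)
      have p: "0 \<le> norm u * norm v" by simp
      have "2*norm u*norm v = 2*(norm u*norm v)" by simp
      then show ?thesis using p q by linarith
    qed
    finally show "cmod (cnj (u$i) * v$i) \<le> (norm u)^2 + (norm v)^2" .
  qed
  finally show ?thesis by simp
qed


lemma BK_vec_eq: "B *v vconj v = (\<chi> i. \<Sum>j\<in>UNIV. B$i$j * cnj (v$j))"
  unfolding matrix_vector_mult_def vconj_def by simp

lemma meas_BK:
  fixes f :: "'a \<Rightarrow> complex ^ 'N::finite"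
  assumes "f \<in> borel_measurable M"
  shows "(\<lambda>x. B *v vconj (f x)) \<in> borel_measurable M"
proof -
  have "continuous_on UNIV (\<lambda>v::complex^'N. (\<chi> i. \<Sum>j\<in>UNIV. B$i$j * cnj (v$j)))"
    by (intro continuous_intros)
  from borel_measurable_continuous_on[OF this assms] show ?thesis
    unfolding BK_vec_eq .
qed

lemma meas_cinner:
  fixes f g :: "'a \<Rightarrow> complex ^ 'N::finite"
  assumes "f \<in> borel_measurable M" "g \<in> borel_measurable M"
  shows "(\<lambda>x. cinner (f x) (g x)) \<in> borel_measurable M"
proof -
  have "continuous_on UNIV (\<lambda>p::(complex^'N) \<times> (complex^'N). \<Sum>i\<in>UNIV. cnj (fst p $ i) * snd p $ i)"
    by (intro continuous_intros)
  from borel_measurable_continuous_on[OF this borel_measurable_Pair[OF assms]] show ?thesis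
    unfolding cinner_def by simp
qed

lemma int_cinner:
  fixes f g :: "'a \<Rightarrow> complex ^ 'N::finite"
  assumes "f \<in> borel_measurable M" "g \<in> borel_measurable M"
    "integrable M (\<lambda>x. (norm (f x))^2)" "integrable M (\<lambda>x. (norm (g x))^2)"
  shows "integrable M (\<lambda>x. cinner (f x) (g x))"
proof (rule Bochner_Integration.integrable_bound)
  show "integrable M (\<lambda>x. real CARD('N) * ((norm (f x))^2 + (norm (g x))^2))"
    using assms(3,4) by (intro integrable_mult_right Bochner_Integration.integrable_add)
  show "(\<lambda>x. cinner (f x) (g x)) \<in> borel_measurable M" using meas_cinner[OF assms(1,2)] .
  show "AE x in M. norm (cinner (f x) (g x)) \<le> norm (real CARD('N) * ((norm (f x))^2 + (norm (g x))^2))"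
    using cmod_cinner_le by (intro AE_I2) (simp add: abs_of_nonneg)
qed

lemma alg:
  fixes a b L :: complex and q :: real
  assumes ab: "(cmod a)\<^sup>2 - (cmod b)\<^sup>2 = 1"
  shows "(((cmod a)\<^sup>2 + (cmod b)\<^sup>2) * q + 2 * Re (cnj a * b * L))^2
     - (cmod ((cnj a)\<^sup>2 * L + 2 * cnj a * cnj b * complex_of_real q + (cnj b)\<^sup>2 * cnj L))\<^sup>2
     = q^2 - (cmod L)^2"
proof -
  obtain a1 a2 where a: "a = Complex a1 a2" by (cases a)
  obtain b1 b2 where b: "b = Complex b1 b2" by (cases b)
  obtain l1 l2 where l: "L = Complex l1 l2" by (cases L)
  have ab': "a1^2+a2^2-b1^2-b2^2 = 1" using ab unfolding a b cmod_power2 by simp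
  have "(((cmod a)\<^sup>2 + (cmod b)\<^sup>2) * q + 2 * Re (cnj a * b * L))^2
     - (cmod ((cnj a)\<^sup>2 * L + 2 * cnj a * cnj b * complex_of_real q + (cnj b)\<^sup>2 * cnj L))\<^sup>2
     = (a1^2+a2^2-b1^2-b2^2)^2 * (q^2 - (l1^2+l2^2))"
    unfolding a b l cmod_power2 by (simp add: power2_eq_square algebra_simps)
  then show ?thesis using ab' unfolding l cmod_power2 by simp
qed

theorem lemma2p8:
  fixes \<alpha> :: "'n::finite \<Rightarrow> complex ^ 'N::finite ^ 'N"
    and \<beta> B :: "complex ^ 'N ^ 'N"
    and m :: real and a b :: complex
    and \<psi> :: "real ^ 'n \<Rightarrow> complex ^ 'N"
  assumes N_even: "even CARD('N)" and N_ge2: "CARD('N) \<ge> 2"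
    and m_pos: "m > 0"
    and alpha_sa: "\<And>j. cadj (\<alpha> j) = \<alpha> j"
    and beta_sa: "cadj \<beta> = \<beta>"
    and alpha_sq: "\<And>j. \<alpha> j ** \<alpha> j = mat 1"
    and beta_sq: "\<beta> ** \<beta> = mat 1"
    and alpha_anti: "\<And>j k. j \<noteq> k \<Longrightarrow> \<alpha> j ** \<alpha> k + \<alpha> k ** \<alpha> j = 0"
    and alpha_beta_anti: "\<And>j. \<alpha> j ** \<beta> + \<beta> ** \<alpha> j = 0"
    and BK_D_anti: "\<And>\<phi>. (\<forall>x. \<phi> differentiable (at x)) \<Longrightarrow>
         (\<forall>x. BK B (dirac \<alpha> \<beta> m \<phi>) x + dirac \<alpha> \<beta> m (BK B \<phi>) x = 0)"
    and BK_KBstar: "\<And>v. B *v vconj v = vconj (cadj B *v v)"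
    and B_unitary: "cadj B ** B = mat 1"
    and ab: "(cmod a)\<^sup>2 - (cmod b)\<^sup>2 = 1"
    and psi_L2: "L2 \<psi>"
  shows "(Qf (bog a b B \<psi>) = complex_of_real ((cmod a)\<^sup>2 + (cmod b)\<^sup>2) * Qf \<psi>
            + complex_of_real (2 * Re (cnj a * b * Lam B \<psi>)))
    \<and> (Lam B (bog a b B \<psi>) = (cnj a)\<^sup>2 * Lam B \<psi> + 2 * cnj a * cnj b * Qf \<psi>
            + (cnj b)\<^sup>2 * cnj (Lam B \<psi>))
    \<and> ((Qf (bog a b B \<psi>))\<^sup>2 - complex_of_real ((cmod (Lam B (bog a b B \<psi>)))\<^sup>2)
            = (Qf \<psi>)\<^sup>2 - complex_of_real ((cmod (Lam B \<psi>))\<^sup>2))"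
  proof -
  have mpsi: "\<psi> \<in> borel_measurable lborel" and ipsi: "integrable lborel (\<lambda>x. (norm (\<psi> x))\<^sup>2)"
    using psi_L2 unfolding L2_def by auto
  define w where "w = (\<lambda>x. B *v vconj (\<psi> x))"
  have BKpsi: "BK B \<psi> = w" unfolding w_def BK_def by simp
  have mw: "w \<in> borel_measurable lborel" unfolding w_def by (rule meas_BK[OF mpsi])
  have BBs: "B ** cadj B = mat 1" using B_unitary matrix_left_right_inverse by blast
  have P1: "cinner (w x) (w x) = cinner (\<psi> x) (\<psi> x)" for x
  proof -
    have "cinner (w x) (w x) = cinner (vconj (\<psi> x)) ((cadj B ** B) *v vconj (\<psi> x))"
      unfolding w_def cinner_adj matrix_vector_mul_assoc ..
    also have "\<dots> = cnj (cinner (\<psi> x) (\<psi> x))" by (simp add: B_unitary cinner_conj)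
    also have "\<dots> = cinner (\<psi> x) (\<psi> x)" by (simp add: cinner_self)
    finally show ?thesis .
  qed
  have P4: "B *v vconj (w x) = \<psi> x" for x
    unfolding w_def BK_KBstar vconj_vconj matrix_vector_mul_assoc BBs by simp
  have nw: "(norm (w x))\<^sup>2 = (norm (\<psi> x))\<^sup>2" for x
    using P1[of x] unfolding cinner_self of_real_eq_iff .
  have iw: "integrable lborel (\<lambda>x. (norm (w x))\<^sup>2)" unfolding nw by (rule ipsi)
  have iuu: "integrable lborel (\<lambda>x. cinner (\<psi> x) (\<psi> x))"
    by (rule int_cinner[OF mpsi mpsi ipsi ipsi])
  have iuw: "integrable lborel (\<lambda>x. cinner (\<psi> x) (w x))"
    by (rule int_cinner[OF mpsi mw ipsi iw])
  have Qdef: "Qf \<psi> = (LINT x|lborel. cinner (\<psi> x) (\<psi> x))" unfolding Qf_def ..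
  have Ldef: "Lam B \<psi> = (LINT x|lborel. cinner (\<psi> x) (w x))" unfolding Lam_def BKpsi ..
  have Qreal: "Qf \<psi> = complex_of_real (LINT x|lborel. (norm (\<psi> x))\<^sup>2)"
    unfolding Qdef cinner_self by (rule integral_complex_of_real)
  have bogx: "bog a b B \<psi> x = a *s \<psi> x + b *s w x" for x
    unfolding bog_def BKpsi ..
  have g1: "cinner (bog a b B \<psi> x) (bog a b B \<psi> x)
      = complex_of_real ((cmod a)\<^sup>2 + (cmod b)\<^sup>2) * cinner (\<psi> x) (\<psi> x)
        + (cnj a * b) * cinner (\<psi> x) (w x) + cnj ((cnj a * b) * cinner (\<psi> x) (w x))" for x
  proof -
    have "cinner (bog a b B \<psi> x) (bog a b B \<psi> x)
       = cnj a * (a * cinner (\<psi> x) (\<psi> x) + b * cinner (\<psi> x) (w x))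
       + cnj b * (a * cinner (w x) (\<psi> x) + b * cinner (w x) (w x))"
      by (simp only: bogx cinner_lin_left) (simp add: cinner_lin_right algebra_simps)
    also have "\<dots> = (cnj a * a + cnj b * b) * cinner (\<psi> x) (\<psi> x)
        + (cnj a * b) * cinner (\<psi> x) (w x) + cnj ((cnj a * b) * cinner (\<psi> x) (w x))"
      unfolding P1 cinner_sym[of "w x" "\<psi> x"] by (simp add: algebra_simps)
    also have "cnj a * a + cnj b * b = complex_of_real ((cmod a)\<^sup>2 + (cmod b)\<^sup>2)"
      unfolding of_real_add complex_norm_square by (simp add: mult.commute)
    finally show ?thesis .
  qed
  have C1: "Qf (bog a b B \<psi>) = complex_of_real ((cmod a)\<^sup>2 + (cmod b)\<^sup>2) * Qf \<psi>
            + complex_of_real (2 * Re (cnj a * b * Lam B \<psi>))"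
  proof -
    have "Qf (bog a b B \<psi>) = complex_of_real ((cmod a)\<^sup>2 + (cmod b)\<^sup>2) * Qf \<psi>
        + ((cnj a * b) * Lam B \<psi> + cnj ((cnj a * b) * Lam B \<psi>))"
      unfolding Qf_def[of "bog a b B \<psi>"] g1 Qdef Ldef using iuu iuw by simp
    then show ?thesis by (simp only: complex_add_cnj)
  qed
  have BKg: "BK B (bog a b B \<psi>) x = cnj a *s w x + cnj b *s \<psi> x" for x
    by (simp only: BK_def bogx BKlin P4) (simp add: w_def)
  have g2: "cinner (bog a b B \<psi> x) (BK B (bog a b B \<psi>) x)
      = (cnj a)\<^sup>2 * cinner (\<psi> x) (w x) + 2 * cnj a * cnj b * cinner (\<psi> x) (\<psi> x)
        + (cnj b)\<^sup>2 * cnj (cinner (\<psi> x) (w x))" for x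
  proof -
    have "cinner (bog a b B \<psi> x) (BK B (bog a b B \<psi>) x)
       = cnj a * (cnj a * cinner (\<psi> x) (w x) + cnj b * cinner (\<psi> x) (\<psi> x))
       + cnj b * (cnj a * cinner (w x) (w x) + cnj b * cinner (w x) (\<psi> x))"
      unfolding BKg by (simp only: bogx cinner_lin_left) (simp add: cinner_lin_right algebra_simps)
    then show ?thesis
      unfolding P1 cinner_sym[of "w x" "\<psi> x"] by (simp add: algebra_simps power2_eq_square)
  qed
  have C2: "Lam B (bog a b B \<psi>) = (cnj a)\<^sup>2 * Lam B \<psi> + 2 * cnj a * cnj b * Qf \<psi>
            + (cnj b)\<^sup>2 * cnj (Lam B \<psi>)"
    unfolding Lam_def[of B "bog a b B \<psi>"] g2 Qdef Ldef using iuu iuw by simp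
  define q where "q = (LINT x|lborel. (norm (\<psi> x))\<^sup>2)"
  have C3: "(Qf (bog a b B \<psi>))\<^sup>2 - complex_of_real ((cmod (Lam B (bog a b B \<psi>)))\<^sup>2)
            = (Qf \<psi>)\<^sup>2 - complex_of_real ((cmod (Lam B \<psi>))\<^sup>2)"
  proof -
    have e: "(((cmod a)\<^sup>2 + (cmod b)\<^sup>2) * q + 2 * Re (cnj a * b * Lam B \<psi>))^2
     - (cmod ((cnj a)\<^sup>2 * Lam B \<psi> + 2 * cnj a * cnj b * complex_of_real q + (cnj b)\<^sup>2 * cnj (Lam B \<psi>)))\<^sup>2
     = q^2 - (cmod (Lam B \<psi>))^2" by (rule alg[OF ab])
    have "(Qf (bog a b B \<psi>))\<^sup>2 - complex_of_real ((cmod (Lam B (bog a b B \<psi>)))\<^sup>2)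
      = complex_of_real ((((cmod a)\<^sup>2 + (cmod b)\<^sup>2) * q + 2 * Re (cnj a * b * Lam B \<psi>))^2
     - (cmod ((cnj a)\<^sup>2 * Lam B \<psi> + 2 * cnj a * cnj b * complex_of_real q + (cnj b)\<^sup>2 * cnj (Lam B \<psi>)))\<^sup>2)"
      unfolding C1 C2 Qreal q_def[symmetric] by simp
    also have "\<dots> = (Qf \<psi>)\<^sup>2 - complex_of_real ((cmod (Lam B \<psi>))\<^sup>2)"
      unfolding e Qreal q_def[symmetric] by simp
    finally show ?thesis .
  qed
  show ?thesis using C1 C2 C3 by blast
qed

end
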